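(* There are absolute constants $c,C>0$ such that for every $n$ and every connected simple undirected graph $G_0$ on $n$ nodes that has exactly $k\ge 1$ fewer edges than the complete graph on $n$ nodes, the triangulation process started from $G_0$ satisfies $$\Pr\big[G_{\lfloor c\,n\ln k\rfloor}\text{ is complete}\big]\le C e^{-k^{1/4}},$$ i.e., with probability at least $1-O(e^{-k^{1/4}})$ it takes $\Omega(n\log k)$ rounds to reach the complete graph.
   Context: Triangulation process: $G_0$ is a connected simple undirected graph on an $n$-node vertex set $V$. Given $G_t$, in round $t$ every node $x$ independently picks two neighbors $v,w$ of $x$ in $G_t$, independently and uniformly at random, and the edge $\{v,w\}$ is added (nothing happens if $v=w$ or the edge already exists); $G_{t+1}$ is $G_t$ together with all edges added in round $t$. Edges are never removed. *)

theory Defs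
  imports "HOL-Probability.Probability"
begin

text \<open>Graphs on the vertex set {0..<n}, given by their edge set (a set of 2-element sets).\<close>

definition all_pairs :: "nat \<Rightarrow> nat set set" where
  "all_pairs n = {{u, v} | u v. u < n \<and> v < n \<and> u \<noteq> v}"

definition simple_graph :: "nat \<Rightarrow> nat set set \<Rightarrow> bool" where
  "simple_graph n E \<longleftrightarrow> E \<subseteq> all_pairs n"

definition connected_graph :: "nat \<Rightarrow> nat set set \<Rightarrow> bool" where
  "connected_graph n E \<longleftrightarrow>
     (\<forall>u<n. \<forall>v<n. (\<lambda>x y. {x, y} \<in> E)\<^sup>*\<^sup>* u v)"

definition complete_graph :: "nat \<Rightarrow> nat set set \<Rightarrow> bool" where
  "complete_graph n E \<longleftrightarrow> E = all_pairs n"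

definition nbrs :: "nat set set \<Rightarrow> nat \<Rightarrow> nat set" where
  "nbrs E x = {v. {x, v} \<in> E}"

text \<open>Choice of node x: two neighbours, independently and uniformly at random.
  (A node without neighbours adds nothing; this never occurs for connected graphs with an
  edge.)\<close>
definition node_choice :: "nat set set \<Rightarrow> nat \<Rightarrow> (nat \<times> nat) pmf" where
  "node_choice E x =
     (if nbrs E x = {} then return_pmf (x, x)
      else pair_pmf (pmf_of_set (nbrs E x)) (pmf_of_set (nbrs E x)))"

definition tri_step :: "nat \<Rightarrow> nat set set \<Rightarrow> nat set set pmf" where
  "tri_step n E =
     map_pmf (\<lambda>f. E \<union> {{fst (f x), snd (f x)} | x. x < n \<and> fst (f x) \<noteq> snd (f x)})
       (Pi_pmf {..<n} (0, 0) (node_choice E))"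

fun tri_process :: "nat \<Rightarrow> nat set set \<Rightarrow> nat \<Rightarrow> nat set set pmf" where
  "tri_process n E 0 = return_pmf E"
| "tri_process n E (Suc t) = bind_pmf (tri_process n E t) (tri_step n)"

end

theory Submission
  imports Defs
begin

definition miss :: "nat \<Rightarrow> nat set set \<Rightarrow> nat" where
  "miss n E = card (all_pairs n - E)"

definition Bad :: "nat \<Rightarrow> nat set set \<Rightarrow> (nat \<times> nat) set" where
  "Bad n E = {(v,w). {v,w} \<in> all_pairs n - E}"

lemma all_pairs_sub: "all_pairs n \<subseteq> (\<lambda>(u,v). {u,v}) ` ({..<n} \<times> {..<n})"
  unfolding all_pairs_def by auto

lemma finite_all_pairs: "finite (all_pairs n)"
  by (rule finite_subset[OF all_pairs_sub]) auto

lemma card_all_pairs: "card (all_pairs n) \<le> n * n"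
proof -
  have "card (all_pairs n) \<le> card ((\<lambda>(u,v). {u,v}) ` ({..<n} \<times> {..<n}))"
    by (rule card_mono[OF _ all_pairs_sub]) auto
  also have "\<dots> \<le> card ({..<n} \<times> {..<n})" by (rule card_image_le) auto
  finally show ?thesis by simp
qed

lemma Bad_sub: "Bad n E \<subseteq> {..<n} \<times> {..<n}"
  unfolding Bad_def all_pairs_def by (auto simp: doubleton_eq_iff)

lemma finite_Bad: "finite (Bad n E)"
  using Bad_sub finite_subset by blast

lemma Bad_distinct: "(v,w) \<in> Bad n E \<Longrightarrow> v \<noteq> w"
  unfolding Bad_def all_pairs_def by (auto simp: doubleton_eq_iff)

lemma card_Bad: "card (Bad n E) \<le> 2 * miss n E"
proof -
  let ?M = "all_pairs n - E"
  have fin: "finite ?M" using finite_all_pairs by auto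
  have eq: "Bad n E = (\<Union>e\<in>?M. {(v,w). {v,w} = e})" unfolding Bad_def by auto
  have c2: "card {(v,w). {v,w} = e} \<le> 2" if "e \<in> ?M" for e
  proof -
    from that obtain a b where e: "e = {a,b}" unfolding all_pairs_def by auto
    have "{(v,w). {v,w} = e} \<subseteq> {(a,b),(b,a)}" using e by (auto simp: doubleton_eq_iff)
    hence "card {(v,w). {v,w} = e} \<le> card {(a,b),(b,a)}" by (intro card_mono) auto
    also have "\<dots> \<le> 2" by (cases "a = b") auto
    finally show ?thesis .
  qed
  have "card (Bad n E) \<le> (\<Sum>e\<in>?M. card {(v,w). {v,w} = e})" unfolding eq by (rule card_UN_le[OF fin])
  also have "\<dots> \<le> (\<Sum>e\<in>?M. 2)" by (rule sum_mono) (use c2 in auto)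
  finally show ?thesis by (simp add: miss_def)
qed

lemma nbrs_sub: "simple_graph n E \<Longrightarrow> nbrs E x \<subseteq> {..<n} - {x}"
  unfolding simple_graph_def nbrs_def all_pairs_def by (auto simp: doubleton_eq_iff)

lemma finite_nbrs: "simple_graph n E \<Longrightarrow> finite (nbrs E x)"
  using nbrs_sub finite_subset by (metis finite_Diff finite_lessThan)

lemma pair_pmf_of_set:
  assumes "finite A" "A \<noteq> {}" "finite B" "B \<noteq> {}"
  shows "pair_pmf (pmf_of_set A) (pmf_of_set B) = pmf_of_set (A \<times> B)"
proof (rule pmf_eqI)
  fix z :: "'a \<times> 'b" obtain a b where z: "z = (a,b)" by fastforce
  show "pmf (pair_pmf (pmf_of_set A) (pmf_of_set B)) z = pmf (pmf_of_set (A \<times> B)) z"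
    using assms unfolding z by (simp add: pmf_pair card_cartesian_product indicator_def)
qed

definition p :: "nat \<Rightarrow> nat set set \<Rightarrow> nat \<Rightarrow> real" where
  "p n E x = measure_pmf.prob (node_choice E x) (Bad n E)"

lemma p_empty: "nbrs E x = {} \<Longrightarrow> p n E x = 0"
  unfolding p_def node_choice_def using Bad_distinct[of x x n E] by (auto simp: measure_return indicator_def)

lemma p_le:
  assumes "simple_graph n E" "nbrs E x \<noteq> {}"
  shows "p n E x \<le> 2 * real (miss n E) / real (card (nbrs E x))^2"
proof -
  let ?N = "nbrs E x"
  have fin: "finite ?N" using finite_nbrs[OF assms(1)] .
  have "p n E x = real (card ((?N \<times> ?N) \<inter> Bad n E)) / real (card (?N \<times> ?N))"
    unfolding p_def node_choice_def using assms fin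
    by (simp add: pair_pmf_of_set measure_pmf_of_set)
  also have "card (?N \<times> ?N) = (card ?N)^2" by (simp add: card_cartesian_product power2_eq_square)
  also have "card ((?N \<times> ?N) \<inter> Bad n E) \<le> card (Bad n E)"
    by (intro card_mono finite_Bad) auto
  hence "real (card ((?N \<times> ?N) \<inter> Bad n E)) \<le> 2 * real (miss n E)"
    using card_Bad[of n E] by linarith
  finally show ?thesis by (simp add: divide_right_mono)
qed

lemma p_nonneg: "0 \<le> p n E x" unfolding p_def by simp
lemma p_le1: "p n E x \<le> 1" unfolding p_def by simp

lemma sum_p:
  assumes "simple_graph n E" "n \<ge> 2"
  shows "(\<Sum>x<n. p n E x) \<le> 16 * real (miss n E) / real n"
proof -
  define m where "m = real (miss n E)"
  define d where "d x = card (nbrs E x)" for x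
  define Low where "Low = {x\<in>{..<n}. 2 * d x < n}"
  define High where "High = {x\<in>{..<n}. \<not> 2 * d x < n}"
  have split: "(\<Sum>x<n. p n E x) = (\<Sum>x\<in>Low. p n E x) + (\<Sum>x\<in>High. p n E x)"
  proof -
    have "{..<n} = Low \<union> High" unfolding Low_def High_def by auto
    moreover have "Low \<inter> High = {}" unfolding Low_def High_def by auto
    moreover have "finite Low" "finite High" unfolding Low_def High_def by auto
    ultimately show ?thesis by (metis sum.union_disjoint)
  qed
  have nr: "real n > 0" using assms by simp
  have hi: "p n E x \<le> 8 * m / (real n)^2" if "x \<in> High" for x
  proof -
    have dn: "2 * d x \<ge> n" using that unfolding High_def by auto
    have dpos: "d x > 0" using dn assms(2) by linarith
    have ne: "nbrs E x \<noteq> {}" using dn assms(2) unfolding d_def by auto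
    have "real n ^2 \<le> (2 * real (d x))^2" using dn by (intro power_mono) auto
    hence d2: "real n ^2 / 4 \<le> real (d x) ^2" by (simp add: power_mult_distrib)
    have "p n E x \<le> 2 * m / real (d x)^2" using p_le[OF assms(1) ne] unfolding m_def d_def .
    also have "\<dots> \<le> 2 * m / (real n^2 / 4)"
      using d2 nr dpos by (intro divide_left_mono) (auto simp: m_def)
    finally show ?thesis by simp
  qed
  have "(\<Sum>x\<in>High. p n E x) \<le> (\<Sum>x\<in>High. 8 * m / (real n)^2)" by (rule sum_mono) (use hi in auto)
  also have "\<dots> = real (card High) * (8 * m / (real n)^2)" by simp
  also have "\<dots> \<le> real n * (8 * m / (real n)^2)"
  proof (rule mult_right_mono)
    have "card High \<le> card {..<n}" unfolding High_def by (intro card_mono) auto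
    thus "real (card High) \<le> real n" by simp
  qed (auto simp: m_def)
  also have "\<dots> = 8 * m / real n" using nr by (simp add: power2_eq_square)
  finally have H: "(\<Sum>x\<in>High. p n E x) \<le> 8 * m / real n" .
  define S where "S x = {v. v < n \<and> v \<noteq> x \<and> v \<notin> nbrs E x}" for x
  have SB: "Sigma Low S \<subseteq> Bad n E"
    unfolding Low_def S_def Bad_def all_pairs_def nbrs_def by auto
  have finS: "finite (S x)" for x unfolding S_def by auto
  have finL: "finite Low" unfolding Low_def by auto
  have Sx: "n \<le> 4 * card (S x)" if "x \<in> Low" for x
  proof -
    have xn: "x < n" and dx: "2 * d x < n" using that unfolding Low_def by auto
    have "{..<n} - {x} \<subseteq> S x \<union> nbrs E x" unfolding S_def by auto
    hence "card ({..<n} - {x}) \<le> card (S x \<union> nbrs E x)"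
      using finS finite_nbrs[OF assms(1)] by (intro card_mono) auto
    also have "\<dots> \<le> card (S x) + d x" unfolding d_def by (rule card_Un_le)
    finally have "n - 1 \<le> card (S x) + d x" using xn by simp
    thus ?thesis using dx assms(2) by linarith
  qed
  have "card Low * n = (\<Sum>x\<in>Low. n)" by simp
  also have "\<dots> \<le> (\<Sum>x\<in>Low. 4 * card (S x))" by (rule sum_mono) (use Sx in auto)
  also have "\<dots> = 4 * card (Sigma Low S)" using finL finS by (simp add: sum_distrib_left)
  also have "\<dots> \<le> 4 * card (Bad n E)" using SB finite_Bad by (intro mult_le_mono2 card_mono) auto
  also have "\<dots> \<le> 8 * miss n E" using card_Bad[of n E] by simp
  finally have cl: "real (card Low) * real n \<le> 8 * m" unfolding m_def by (simp flip: of_nat_mult)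
  have "(\<Sum>x\<in>Low. p n E x) \<le> (\<Sum>x\<in>Low. 1)" by (rule sum_mono) (rule p_le1)
  also have "\<dots> = real (card Low)" by simp
  also have "\<dots> \<le> 8 * m / real n" using cl nr by (simp add: field_simps)
  finally have L: "(\<Sum>x\<in>Low. p n E x) \<le> 8 * m / real n" .
  have "8 * m / real n + 8 * m / real n = 16 * m / real n" by (simp add: field_simps)
  thus ?thesis using split H L unfolding m_def by linarith
qed

definition Fadd :: "nat \<Rightarrow> nat set set \<Rightarrow> (nat \<Rightarrow> nat \<times> nat) \<Rightarrow> nat set set" where
  "Fadd n E f = E \<union> {{fst (f x), snd (f x)} | x. x < n \<and> fst (f x) \<noteq> snd (f x)}"

lemma tri_step_Fadd: "tri_step n E = map_pmf (Fadd n E) (Pi_pmf {..<n} (0, 0) (node_choice E))"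
  unfolding tri_step_def Fadd_def ..

lemma miss_Fadd: "miss n E \<le> miss n (Fadd n E f) + card {x\<in>{..<n}. f x \<in> Bad n E}"
proof -
  let ?M = "all_pairs n - E"
  let ?A = "{{fst (f x), snd (f x)} | x. x < n \<and> fst (f x) \<noteq> snd (f x)}"
  have fM: "finite ?M" using finite_all_pairs by auto
  have eq: "all_pairs n - Fadd n E f = ?M - ?A" unfolding Fadd_def by auto
  have "?M \<subseteq> (?M - ?A) \<union> (?M \<inter> ?A)" by auto
  hence "card ?M \<le> card ((?M - ?A) \<union> (?M \<inter> ?A))" using fM by (intro card_mono) auto
  also have "\<dots> \<le> card (?M - ?A) + card (?M \<inter> ?A)" by (rule card_Un_le)
  also have "?M \<inter> ?A \<subseteq> (\<lambda>x. {fst (f x), snd (f x)}) ` {x\<in>{..<n}. f x \<in> Bad n E}"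
    unfolding Bad_def by auto
  hence "card (?M \<inter> ?A) \<le> card ((\<lambda>x. {fst (f x), snd (f x)}) ` {x\<in>{..<n}. f x \<in> Bad n E})"
    by (intro card_mono) auto
  also have "\<dots> \<le> card {x\<in>{..<n}. f x \<in> Bad n E}" by (rule card_image_le) auto
  finally show ?thesis unfolding miss_def eq by simp
qed

lemma prod_if_exp:
  assumes "finite A"
  shows "(\<Prod>x\<in>A. if P x then exp s else 1) = exp (s * real (card {x\<in>A. P x}))"
  using assms
proof (induction A rule: finite_induct)
  case empty thus ?case by simp
next
  case (insert a A)
  have "{x \<in> insert a A. P x} = (if P a then insert a {x\<in>A. P x} else {x\<in>A. P x})" by auto
  moreover have "a \<notin> {x\<in>A. P x}" using insert by auto
  moreover have "finite {x\<in>A. P x}" using insert by auto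
  ultimately show ?case using insert by (auto simp: distrib_left exp_add)
qed

lemma int_bdd: "(\<And>x. \<bar>g x\<bar> \<le> B) \<Longrightarrow> integrable (measure_pmf q) (g :: _ \<Rightarrow> real)"
  by (rule measure_pmf.integrable_const_bound[where B=B]) auto

lemma exp_le_3: "0 \<le> s \<Longrightarrow> s \<le> 1 \<Longrightarrow> exp s \<le> 1 + 3 * (s::real)"
proof -
  assume s: "0 \<le> s" "s \<le> 1"
  have "exp (s/2) \<le> 1 + 2 * (s/2)" using s by (intro real_exp_bound_lemma) auto
  hence "exp (s/2) ^ 2 \<le> (1 + s)^2" by (intro power_mono) auto
  also have "exp (s/2) ^ 2 = exp s" by (simp add: exp_double[symmetric] power2_eq_square exp_add[symmetric])
  moreover have "s * s \<le> s" using s by (simp add: mult_left_le)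
  ultimately show ?thesis by (simp add: power2_eq_square algebra_simps)
qed

lemma node_exp:
  assumes "0 \<le> s"
  shows "measure_pmf.expectation (node_choice E x) (\<lambda>v. if v \<in> Bad n E then exp s else 1)
         \<le> exp ((exp s - 1) * p n E x)"
proof -
  have eq: "(\<lambda>v. if v \<in> Bad n E then exp s else 1) = (\<lambda>v. 1 + (exp s - 1) * indicator (Bad n E) v)"
    by (auto simp: indicator_def)
  have "measure_pmf.expectation (node_choice E x) (\<lambda>v. 1 + (exp s - 1) * indicator (Bad n E) v)
        = 1 + (exp s - 1) * p n E x"
  proof -
    have i1: "integrable (measure_pmf (node_choice E x)) (\<lambda>v. (exp s - 1) * indicator (Bad n E) v)"
      by (rule int_bdd[where B="\<bar>exp s - 1\<bar>"]) (auto simp: indicator_def)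
    have i2: "measure_pmf.expectation (node_choice E x) (indicator (Bad n E)) = p n E x"
      unfolding p_def by (subst Bochner_Integration.integral_indicator) simp
    show ?thesis
      by (subst Bochner_Integration.integral_add) (use i1 i2 in auto)
  qed
  also have "\<dots> \<le> exp ((exp s - 1) * p n E x)" by (rule exp_ge_add_one_self)
  finally show ?thesis unfolding eq .
qed

lemma step_bound:
  assumes simple: "simple_graph n E" and n2: "n \<ge> 2" and s: "0 \<le> s" "s \<le> 1"
  shows "measure_pmf.expectation (tri_step n E) (\<lambda>G. exp (- s * real (miss n G)))
         \<le> exp (- (s * (1 - 48 / real n)) * real (miss n E))"
proof -
  define m where "m = real (miss n E)"
  define h where "h x v = (if v \<in> Bad n E then exp s else 1)" for x :: nat and v :: "nat \<times> nat"
  let ?P = "Pi_pmf {..<n} (0, 0) (node_choice E)"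
  have hpos: "0 \<le> h x v" for x v unfolding h_def by auto
  have hb: "\<bar>h x v\<bar> \<le> exp s" for x v unfolding h_def using s by auto
  have pw: "exp (- s * real (miss n (Fadd n E f))) \<le> exp (- s * m) * (\<Prod>x\<in>{..<n}. h x (f x))" for f
  proof -
    have "(\<Prod>x\<in>{..<n}. h x (f x)) = exp (s * real (card {x\<in>{..<n}. f x \<in> Bad n E}))"
      unfolding h_def by (rule prod_if_exp) auto
    moreover have "- s * real (miss n (Fadd n E f)) \<le> - s * m + s * real (card {x\<in>{..<n}. f x \<in> Bad n E})"
    proof -
      have "m \<le> real (miss n (Fadd n E f)) + real (card {x\<in>{..<n}. f x \<in> Bad n E})"
        unfolding m_def using miss_Fadd[of n E f] by linarith
      hence "s * m \<le> s * (real (miss n (Fadd n E f)) + real (card {x\<in>{..<n}. f x \<in> Bad n E}))"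
        using s by (intro mult_left_mono) auto
      thus ?thesis by (simp add: algebra_simps)
    qed
    ultimately show ?thesis by (simp add: exp_add[symmetric])
  qed
  have "measure_pmf.expectation (tri_step n E) (\<lambda>G. exp (- s * real (miss n G)))
        = measure_pmf.expectation ?P (\<lambda>f. exp (- s * real (miss n (Fadd n E f))))"
    unfolding tri_step_Fadd by simp
  also have "\<dots> \<le> measure_pmf.expectation ?P (\<lambda>f. exp (- s * m) * (\<Prod>x\<in>{..<n}. h x (f x)))"
  proof (rule integral_mono)
    show "integrable (measure_pmf ?P) (\<lambda>f. exp (- s * real (miss n (Fadd n E f))))"
      by (rule int_bdd[where B=1]) (use s in auto)
    show "integrable (measure_pmf ?P) (\<lambda>f. exp (- s * m) * (\<Prod>x\<in>{..<n}. h x (f x)))"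
      by (intro integrable_mult_right integrable_prod_Pi_pmf int_bdd[where B="exp s"] hb) auto
  qed (rule pw)
  also have "\<dots> = exp (- s * m) * (\<Prod>x\<in>{..<n}. measure_pmf.expectation (node_choice E x) (h x))"
    by (subst integral_mult_right_zero, subst expectation_prod_Pi_pmf)
       (auto intro!: int_bdd[where B="exp s"] hb hpos)
  also have "\<dots> \<le> exp (- s * m) * (\<Prod>x\<in>{..<n}. exp ((exp s - 1) * p n E x))"
  proof -
    have he: "measure_pmf.expectation (node_choice E x) (h x) \<le> exp ((exp s - 1) * p n E x)" for x
      unfolding h_def using node_exp[OF s(1)] .
    show ?thesis
      by (intro mult_left_mono prod_mono conjI he) (auto intro!: Bochner_Integration.integral_nonneg hpos)
  qed
  also have "(\<Prod>x\<in>{..<n}. exp ((exp s - 1) * p n E x)) = exp ((exp s - 1) * (\<Sum>x<n. p n E x))"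
    by (simp add: exp_sum sum_distrib_left)
  also have "\<dots> \<le> exp ((3 * s) * (16 * m / real n))"
  proof -
    have a: "0 \<le> exp s - 1" "exp s - 1 \<le> 3 * s" using exp_le_3[OF s] s by auto
    have b: "0 \<le> (\<Sum>x<n. p n E x)" by (intro sum_nonneg p_nonneg)
    have "(exp s - 1) * (\<Sum>x<n. p n E x) \<le> (3 * s) * (16 * m / real n)"
      using sum_p[OF simple n2] a b unfolding m_def by (intro mult_mono) auto
    thus ?thesis by simp
  qed
  also have "exp (- s * m) * exp ((3 * s) * (16 * m / real n)) = exp (- (s * (1 - 48 / real n)) * m)"
    by (simp add: exp_add[symmetric] algebra_simps)
  finally show ?thesis unfolding m_def by simp
qed

lemma exp_bind:
  fixes g :: "'b \<Rightarrow> real"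
  assumes g: "\<And>y. 0 \<le> g y" "\<And>y. g y \<le> B"
  shows "measure_pmf.expectation (bind_pmf M N) g = measure_pmf.expectation M (\<lambda>x. measure_pmf.expectation (N x) g)"
proof -
  have ig: "integrable (measure_pmf q) g" for q
    by (rule int_bdd[where B=B]) (use g in \<open>auto simp: abs_le_iff intro: order_trans\<close>)
  have nn: "0 \<le> measure_pmf.expectation q g" for q
    by (rule Bochner_Integration.integral_nonneg) (use g in auto)
  have le: "measure_pmf.expectation q g \<le> B" for q
  proof -
    have "measure_pmf.expectation q g \<le> measure_pmf.expectation q (\<lambda>_. B)"
      by (rule integral_mono) (use ig g in auto)
    thus ?thesis by simp
  qed
  have ig2: "integrable (measure_pmf M) (\<lambda>x. measure_pmf.expectation (N x) g)"
    by (rule int_bdd[where B=B]) (use nn le in \<open>auto simp: abs_le_iff intro: order_trans\<close>)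
  have "ennreal (measure_pmf.expectation (bind_pmf M N) g) = (\<integral>\<^sup>+y. ennreal (g y) \<partial>bind_pmf M N)"
    by (rule nn_integral_eq_integral[symmetric]) (use ig g in auto)
  also have "\<dots> = (\<integral>\<^sup>+x. \<integral>\<^sup>+y. ennreal (g y) \<partial>N x \<partial>M)" by simp
  also have "\<dots> = (\<integral>\<^sup>+x. ennreal (measure_pmf.expectation (N x) g) \<partial>M)"
    by (intro nn_integral_cong nn_integral_eq_integral) (use ig g in auto)
  also have "\<dots> = ennreal (measure_pmf.expectation M (\<lambda>x. measure_pmf.expectation (N x) g))"
    by (rule nn_integral_eq_integral) (use ig2 nn in auto)
  finally show ?thesis
    by (subst (asm) ennreal_inj) (auto intro!: nn Bochner_Integration.integral_nonneg)
qed

lemma step_simple: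
  assumes "simple_graph n E" "G \<in> set_pmf (tri_step n E)"
  shows "simple_graph n G"
proof -
  from assms(2) obtain f where f: "f \<in> set_pmf (Pi_pmf {..<n} (0, 0) (node_choice E))" and G: "G = Fadd n E f"
    unfolding tri_step_Fadd by auto
  have fx: "f x \<in> set_pmf (node_choice E x)" if "x < n" for x
    using f that by (auto simp: set_Pi_pmf PiE_dflt_def)
  have "e \<in> all_pairs n" if e: "e \<in> G" for e
  proof (cases "e \<in> E")
    case True thus ?thesis using assms(1) unfolding simple_graph_def by auto
  next
    case False
    then obtain x where x: "x < n" "fst (f x) \<noteq> snd (f x)" "e = {fst (f x), snd (f x)}"
      using e unfolding G Fadd_def by auto
    show ?thesis
    proof (cases "nbrs E x = {}")
      case True thus ?thesis using fx[OF x(1)] x(2) unfolding node_choice_def by auto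
    next
      case ne: False
      have "f x \<in> nbrs E x \<times> nbrs E x"
        using fx[OF x(1)] ne finite_nbrs[OF assms(1)] unfolding node_choice_def by auto
      hence "fst (f x) \<in> nbrs E x" "snd (f x) \<in> nbrs E x" by auto
      hence "fst (f x) < n" "snd (f x) < n" using nbrs_sub[OF assms(1), of x] by auto
      thus ?thesis using x unfolding all_pairs_def by auto
    qed
  qed
  thus ?thesis unfolding simple_graph_def by auto
qed

lemma proc_simple: "simple_graph n E \<Longrightarrow> G \<in> set_pmf (tri_process n E t) \<Longrightarrow> simple_graph n G"
proof (induction t arbitrary: G)
  case 0 thus ?case by simp
next
  case (Suc t) thus ?case using step_simple by auto
qed

lemma proc_bound:
  assumes simple: "simple_graph n E" and n: "n \<ge> 96"
  shows "0 \<le> s \<Longrightarrow> s \<le> 1 \<Longrightarrow> measure_pmf.expectation (tri_process n E t) (\<lambda>G. exp (- s * real (miss n G)))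
         \<le> exp (- (s * (1 - 48 / real n) ^ t) * real (miss n E))"
proof (induction t arbitrary: s)
  case 0 thus ?case by simp
next
  case (Suc t)
  define \<rho> where "\<rho> = 1 - 48 / real n"
  have \<rho>: "0 \<le> \<rho>" "\<rho> \<le> 1" unfolding \<rho>_def using n by (auto simp: field_simps)
  have "measure_pmf.expectation (tri_process n E (Suc t)) (\<lambda>G. exp (- s * real (miss n G)))
      = measure_pmf.expectation (tri_process n E t)
          (\<lambda>G. measure_pmf.expectation (tri_step n G) (\<lambda>G. exp (- s * real (miss n G))))"
    by simp (rule exp_bind[where B=1], use Suc.prems in auto)
  also have "\<dots> \<le> measure_pmf.expectation (tri_process n E t) (\<lambda>G. exp (- (s * \<rho>) * real (miss n G)))"
  proof (rule integral_mono_AE)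
    show "integrable (measure_pmf (tri_process n E t)) (\<lambda>G. exp (- (s * \<rho>) * real (miss n G)))"
      by (rule int_bdd[where B=1]) (use Suc.prems \<rho> in auto)
    show "integrable (measure_pmf (tri_process n E t))
          (\<lambda>G. measure_pmf.expectation (tri_step n G) (\<lambda>G. exp (- s * real (miss n G))))"
    proof (rule int_bdd[where B=1])
      fix G
      have "measure_pmf.expectation (tri_step n G) (\<lambda>G. exp (- s * real (miss n G)))
            \<le> measure_pmf.expectation (tri_step n G) (\<lambda>G. 1)"
        by (rule integral_mono) (use Suc.prems in \<open>auto intro!: int_bdd[where B=1]\<close>)
      moreover have "0 \<le> measure_pmf.expectation (tri_step n G) (\<lambda>G. exp (- s * real (miss n G)))"
        by (rule Bochner_Integration.integral_nonneg) auto
      ultimately show "\<bar>measure_pmf.expectation (tri_step n G) (\<lambda>G. exp (- s * real (miss n G)))\<bar> \<le> 1"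
        by simp
    qed
    show "AE G in measure_pmf (tri_process n E t).
            measure_pmf.expectation (tri_step n G) (\<lambda>G. exp (- s * real (miss n G)))
            \<le> exp (- (s * \<rho>) * real (miss n G))"
    proof (rule AE_pmfI)
      fix G assume "G \<in> set_pmf (tri_process n E t)"
      hence "simple_graph n G" using proc_simple[OF simple] by auto
      thus "measure_pmf.expectation (tri_step n G) (\<lambda>G. exp (- s * real (miss n G)))
            \<le> exp (- (s * \<rho>) * real (miss n G))"
        unfolding \<rho>_def using step_bound[of n G s] n Suc.prems by auto
    qed
  qed
  also have "\<dots> \<le> exp (- ((s * \<rho>) * \<rho> ^ t) * real (miss n E))"
    unfolding \<rho>_def by (rule Suc.IH) (use Suc.prems \<rho> in \<open>auto simp: \<rho>_def intro: mult_le_one\<close>)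
  finally show ?case by (simp add: \<rho>_def mult.assoc mult.left_commute)
qed

lemma miss_E: "simple_graph n E \<Longrightarrow> card E + k = card (all_pairs n) \<Longrightarrow> miss n E = k"
  unfolding miss_def simple_graph_def
  by (subst card_Diff_subset) (auto intro: finite_subset[OF _ finite_all_pairs])

lemma prob_le_exp:
  "measure_pmf.prob q {G. complete_graph n G} \<le> measure_pmf.expectation q (\<lambda>G. exp (- 1 * real (miss n G)))"
proof -
  have "measure_pmf.prob q {G. complete_graph n G} = measure_pmf.expectation q (indicator {G. complete_graph n G})"
    by (subst Bochner_Integration.integral_indicator) simp
  also have "\<dots> \<le> measure_pmf.expectation q (\<lambda>G. exp (- 1 * real (miss n G)))"
  proof (rule integral_mono)
    show "integrable (measure_pmf q) (indicat_real {G. complete_graph n G})"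
      by (rule int_bdd[where B=1]) (auto simp: indicator_def)
    show "integrable (measure_pmf q) (\<lambda>G. exp (- 1 * real (miss n G)))"
      by (rule int_bdd[where B=1]) auto
    fix G show "indicat_real {G. complete_graph n G} G \<le> exp (- 1 * real (miss n G))"
      by (auto simp: indicator_def complete_graph_def miss_def)
  qed
  finally show ?thesis .
qed

theorem theorem9:
  shows "\<exists>c::real. \<exists>C::real. c > 0 \<and> C > 0 \<and>
    (\<forall>n::nat. \<forall>E::nat set set. \<forall>k::nat.
       simple_graph n E \<longrightarrow> connected_graph n E \<longrightarrow> k \<ge> 1 \<longrightarrow>
       card E + k = card (all_pairs n) \<longrightarrow>
       measure_pmf.prob (tri_process n E (nat \<lfloor>c * real n * ln (real k)\<rfloor>))
           {G. complete_graph n G}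
         \<le> C * exp (- (real k powr (1/4))))"
proof (intro exI conjI allI impI)
  show "(1/192::real) > 0" by simp
  show "exp 9216 > (0::real)" by simp
  fix n :: nat and E :: "nat set set" and k :: nat
  assume simple: "simple_graph n E" and k1: "k \<ge> 1" and card: "card E + k = card (all_pairs n)"
  define T where "T = nat \<lfloor>1/192 * real n * ln (real k)\<rfloor>"
  let ?P = "measure_pmf.prob (tri_process n E T) {G. complete_graph n G}"
  have kr: "real k \<ge> 1" using k1 by simp
  have k14: "real k powr (1/4) \<le> real k"
    using powr_mono[of "1/4" 1 "real k"] kr by simp
  have C1: "exp (- (real k powr (1/4))) \<le> exp 9216 * exp (- (real k powr (1/4)))"
    by simp
  show "?P \<le> exp 9216 * exp (- (real k powr (1/4)))"
  proof (cases "n < 96")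
    case True
    have "k \<le> n * n" using card card_all_pairs[of n] by linarith
    also have "\<dots> \<le> 95 * 95" using True by (intro mult_le_mono) auto
    finally have "real k \<le> 9216" by simp
    hence "0 \<le> 9216 - real k powr (1/4)" using k14 by linarith
    hence "1 \<le> exp (9216 - real k powr (1/4))" by simp
    also have "\<dots> = exp 9216 * exp (- (real k powr (1/4)))" by (simp add: exp_diff exp_minus field_simps)
    finally show ?thesis by (rule order_trans[OF measure_pmf.prob_le_1])
  next
    case False
    hence n: "n \<ge> 96" by simp
    define \<rho> where "\<rho> = 1 - 48 / real n"
    have nr: "real n \<ge> 96" using n by simp
    have x: "0 \<le> 48 / real n" "48 / real n \<le> 1/2" using nr by (auto simp: field_simps)
    have \<rho>pos: "\<rho> > 0" unfolding \<rho>_def using x by auto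
    have "- (48 / real n) - 2 * (48 / real n)^2 \<le> ln \<rho>"
      unfolding \<rho>_def by (rule ln_one_minus_pos_lower_bound) (use x in auto)
    moreover have "2 * (48 / real n)^2 \<le> 48 / real n"
    proof -
      have "2 * (48 / real n)^2 = (2 * (48 / real n)) * (48 / real n)" by (simp add: power2_eq_square)
      also have "\<dots> \<le> 1 * (48 / real n)" using x by (intro mult_right_mono) auto
      finally show ?thesis by simp
    qed
    ultimately have lnr: "ln \<rho> \<ge> - 96 / real n" by simp
    have lnk: "ln (real k) \<ge> 0" using kr by simp
    have Tle: "real T \<le> 1/192 * real n * ln (real k)"
    proof -
      have y: "0 \<le> 1/192 * real n * ln (real k)" using lnk by simp
      hence "real T = real_of_int \<lfloor>1/192 * real n * ln (real k)\<rfloor>" unfolding T_def by simp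
      also have "\<dots> \<le> 1/192 * real n * ln (real k)" by (rule of_int_floor_le)
      finally show ?thesis .
    qed
    have "real T * ln \<rho> \<ge> real T * (- 96 / real n)" using lnr by (intro mult_left_mono) auto
    moreover have "real T * (- 96 / real n) \<ge> (1/192 * real n * ln (real k)) * (- 96 / real n)"
      using Tle nr by (intro mult_right_mono_neg) auto
    moreover have "(1/192 * real n * ln (real k)) * (- 96 / real n) = - (1/2) * ln (real k)"
      using nr by (simp add: field_simps)
    ultimately have TL: "real T * ln \<rho> \<ge> - (1/2) * ln (real k)" by linarith
    have "\<rho> ^ T = exp (real T * ln \<rho>)" using \<rho>pos by (simp add: exp_ln ln_realpow[symmetric])
    also have "\<dots> \<ge> exp (- (1/2) * ln (real k))" using TL by simp
    also have "exp (- (1/2) * ln (real k)) = real k powr (- (1/2))" using kr by (simp add: powr_def)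
    finally have rT: "\<rho> ^ T \<ge> real k powr (- (1/2))" .
    have "real k powr (1/4) \<le> real k powr (1/2)" using kr by (intro powr_mono) auto
    also have "real k powr (1/2) = real k powr (- (1/2)) * real k"
    proof -
      have "real k powr (- (1/2)) * real k = real k powr (- (1/2)) * real k powr 1" using kr by simp
      also have "\<dots> = real k powr (- (1/2) + 1)" by (rule powr_add[symmetric])
      also have "\<dots> = real k powr (1/2)" by simp
      finally show ?thesis by simp
    qed
    also have "\<dots> \<le> \<rho> ^ T * real k" using rT by (intro mult_right_mono) auto
    finally have key: "real k powr (1/4) \<le> \<rho> ^ T * real k" .
    have "?P \<le> measure_pmf.expectation (tri_process n E T) (\<lambda>G. exp (- 1 * real (miss n G)))"
      by (rule prob_le_exp)
    also have "\<dots> \<le> exp (- (1 * \<rho> ^ T) * real (miss n E))"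
      unfolding \<rho>_def by (rule proc_bound[OF simple n]) auto
    also have "\<dots> = exp (- (\<rho> ^ T * real k))" using miss_E[OF simple card] by simp
    also have "\<dots> \<le> exp (- (real k powr (1/4)))" using key by simp
    finally show ?thesis using C1 by linarith
  qed
qed

end
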